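(* Let $V$ be a population of $n$ individuals with pseudo-metric $d$, and let $k_1\le k_2$ be panel sizes. Let $\mathcal{G}$ and $\mathcal{H}$ be the outputs of the Greedy Capture procedure (defined in the context) with panel sizes $k_1$ and $k_2$ respectively. Then for every group $G\in\mathcal{G}$ with center $c_G$ and radius $r_G$ there exists a group $H\in\mathcal{H}$ with center $c_H$ and radius $r_H$ such that $d(c_H,c_G)\le 2r_G$ and $r_H\le r_G$.
   Context: $B(x,\delta)=\{u\in V: d(x,u)\le\delta\}$. Greedy Capture with panel size $K$ (Modified Greedy Capture with every individual initially its own group): maintain a set $U$ of uncovered individuals, initially $V$, and an output collection initially empty; increase $\delta$ continuously from $0$ while $U\ne\emptyset$. At each $\delta$: for each already formed group with center $c$, remove $U\cap B(c,\delta)$ from $U$; then, while some $x\in V$ has $|U\cap B(x,\delta)|\ge n/K$, form the group $U\cap B(x,\delta)$ with center $x$ and radius $\delta$, add it to the output and remove its members from $U$. Return the output collection. *)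

theory Defs
  imports Complex_Main
begin

definition pseudo_metric_on :: "'a set \<Rightarrow> ('a \<Rightarrow> 'a \<Rightarrow> real) \<Rightarrow> bool" where
  "pseudo_metric_on V d \<longleftrightarrow>
     (\<forall>x\<in>V. d x x = 0) \<and>
     (\<forall>x\<in>V. \<forall>y\<in>V. d x y = d y x) \<and>
     (\<forall>x\<in>V. \<forall>y\<in>V. \<forall>z\<in>V. d x z \<le> d x y + d y z)"

definition ball_in :: "'a set \<Rightarrow> ('a \<Rightarrow> 'a \<Rightarrow> real) \<Rightarrow> 'a \<Rightarrow> real \<Rightarrow> 'a set" where
  "ball_in V d x \<delta> = {u \<in> V. d x u \<le> \<delta>}"

text \<open>Uncovered individuals at time delta, once the groups with the listed centers
  have been formed (each formed group with center c has absorbed all of B(c,delta)).\<close>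
definition uncovered :: "'a set \<Rightarrow> ('a \<Rightarrow> 'a \<Rightarrow> real) \<Rightarrow> 'a list \<Rightarrow> real \<Rightarrow> 'a set" where
  "uncovered V d cs \<delta> = V - (\<Union>c\<in>set cs. ball_in V d c \<delta>)"

text \<open>A run of Greedy Capture with panel size K: the output is the list of formed
  groups (center, radius, members) in order of formation.  Any tie-breaking is allowed.  Condition (2): greediness -- between consecutive formations
  (and after the last one) no x has at least n/K uncovered individuals in its ball.\<close>
definition greedy_capture_run ::
  "'a set \<Rightarrow> ('a \<Rightarrow> 'a \<Rightarrow> real) \<Rightarrow> nat \<Rightarrow> ('a \<times> real \<times> 'a set) list \<Rightarrow> bool" where
  "greedy_capture_run V d K gs \<longleftrightarrow>
    (let m = length gs;
         c = (\<lambda>i. fst (gs ! i));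
         r = (\<lambda>i. fst (snd (gs ! i)));
         S = (\<lambda>i. snd (snd (gs ! i)));
         thr = real (card V) / real K
     in
     (\<forall>i<m. c i \<in> V \<and> 0 \<le> r i \<and> (\<forall>j<i. r j \<le> r i) \<and>
        S i = uncovered V d (map fst (take i gs)) (r i) \<inter> ball_in V d (c i) (r i) \<and>
        thr \<le> real (card (S i))) \<and>
     (\<forall>i\<le>m. \<forall>\<delta>\<ge>0. (i = m \<or> \<delta> < r i) \<and> (i = 0 \<or> r (i - 1) \<le> \<delta>) \<longrightarrow>
        \<not> (\<exists>x\<in>V. thr \<le> real (card (uncovered V d (map fst (take i gs)) \<delta> \<inter> ball_in V d x \<delta>)))))"

end

theory Submission
  imports Defs
begin

lemma gcr_D1:
  assumes "greedy_capture_run V d K gs" "i < length gs"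
  shows "fst (gs!i) \<in> V \<and> 0 \<le> fst (snd (gs!i)) \<and> (\<forall>j<i. fst (snd (gs!j)) \<le> fst (snd (gs!i))) \<and>
    snd (snd (gs!i)) = uncovered V d (map fst (take i gs)) (fst (snd (gs!i))) \<inter> ball_in V d (fst (gs!i)) (fst (snd (gs!i))) \<and>
    real (card V) / real K \<le> real (card (snd (snd (gs!i))))"
  using assms unfolding greedy_capture_run_def Let_def by blast

lemma gcr_D2:
  assumes "greedy_capture_run V d K gs" "p \<le> length gs" "\<delta> \<ge> 0" "p = length gs \<or> \<delta> < fst (snd (gs!p))"
    "p = 0 \<or> fst (snd (gs!(p-1))) \<le> \<delta>" "x \<in> V"
  shows "\<not> real (card V) / real K \<le> real (card (uncovered V d (map fst (take p gs)) \<delta> \<inter> ball_in V d x \<delta>))"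
  using assms unfolding greedy_capture_run_def Let_def by blast

theorem lemma5:
  fixes V :: "'a set" and d :: "'a \<Rightarrow> 'a \<Rightarrow> real" and k1 k2 :: nat
    and Gs Hs :: "('a \<times> real \<times> 'a set) list"
  assumes "finite V"
    and "pseudo_metric_on V d"
    and "0 < k1" and "k1 \<le> k2"
    and "greedy_capture_run V d k1 Gs"
    and "greedy_capture_run V d k2 Hs"
  shows "\<forall>(cG, rG, G) \<in> set Gs. \<exists>(cH, rH, H) \<in> set Hs. d cH cG \<le> 2 * rG \<and> rH \<le> rG"
proof (clarify)
  fix c r S
  assume inG: "(c, r, S) \<in> set Gs"
  then obtain i where i: "i < length Gs" "Gs ! i = (c, r, S)" by (metis in_set_conv_nth)
  note G0 = gcr_D1[OF assms(5) i(1), unfolded i(2) fst_conv snd_conv]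
  have G1: "c \<in> V" "0 \<le> r" "S = uncovered V d (map fst (take i Gs)) r \<inter> ball_in V d c r"
    "real (card V) / real k1 \<le> real (card S)"
    using G0 by blast+
  have Ssub: "S \<subseteq> ball_in V d c r" using G1(3) by (simp add: Int_lower2)
  have finB: "finite (ball_in V d c r)" using assms(1) unfolding ball_in_def by simp
  have thr: "real (card V) / real k2 \<le> real (card (ball_in V d c r))"
  proof -
    have "real (card V) / real k2 \<le> real (card V) / real k1"
      using assms(3,4) by (simp add: frac_le)
    also have "\<dots> \<le> real (card S)" by (rule G1(4))
    also have "\<dots> \<le> real (card (ball_in V d c r))" using card_mono[OF finB Ssub] by simp
    finally show ?thesis .
  qed
  define m where "m = length Hs"
  define cH where "cH = (\<lambda>j. fst (Hs ! j))"
  define rH where "rH = (\<lambda>j. fst (snd (Hs ! j)))"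
  have H1: "cH j \<in> V" if "j < m" for j
    using gcr_D1[OF assms(6), of j] that unfolding m_def cH_def by simp
  show "\<exists>(cH, rH, H) \<in> set Hs. d cH c \<le> 2 * r \<and> rH \<le> r"
  proof (rule ccontr)
    assume na: "\<not> ?thesis"
    have far: "d (cH j) c > 2 * r" if "j < m" "rH j \<le> r" for j
    proof -
      have "Hs ! j \<in> set Hs" using that(1) by (simp add: m_def)
      moreover obtain a b e where "Hs ! j = (a, b, e)" by (cases "Hs ! j") auto
      ultimately have "(a, b, e) \<in> set Hs" by simp
      with na have "\<not> (d a c \<le> 2 * r \<and> b \<le> r)" by blast
      moreover have "a = cH j" "b = rH j" using \<open>Hs ! j = (a, b, e)\<close> unfolding cH_def rH_def by simp_all
      ultimately show ?thesis using that(2) by simp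
    qed
    define p where "p = (if \<exists>l<m. r < rH l then LEAST l. l < m \<and> r < rH l else m)"
    have p1: "p \<le> m" "p = m \<or> r < rH p" 
    proof -
      have "p \<le> m \<and> (p = m \<or> r < rH p)"
      proof (cases "\<exists>l<m. r < rH l")
        case True
        then have "p = (LEAST l. l < m \<and> r < rH l)" unfolding p_def by simp
        moreover have "(LEAST l. l < m \<and> r < rH l) < m \<and> r < rH (LEAST l. l < m \<and> r < rH l)"
          using True by (metis (mono_tags, lifting) LeastI_ex)
        ultimately show ?thesis by (simp add: less_imp_le)
      next
        case False
        then show ?thesis unfolding p_def by auto
      qed
      then show "p \<le> m" "p = m \<or> r < rH p" by simp_all
    qed
    have p4: "rH j \<le> r" if "j < p" for j
    proof (cases "\<exists>l<m. r < rH l")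
      case True
      then have pe: "p = (LEAST l. l < m \<and> r < rH l)" unfolding p_def by simp
      have "\<not> (j < m \<and> r < rH j)" using not_less_Least[of j "\<lambda>l. l < m \<and> r < rH l"] that pe by simp
      moreover have "j < m" using that p1(1) by simp
      ultimately show ?thesis by simp
    next
      case False
      then have "p = m" unfolding p_def by (simp only: if_False)
      then show ?thesis using that False by (metis not_less)
    qed
    have p3: "p = 0 \<or> rH (p - 1) \<le> r" using p4 by (cases p) auto
    have eq: "ball_in V d c r \<subseteq> uncovered V d (map fst (take p Hs)) r \<inter> ball_in V d c r"
    proof
      fix u assume u: "u \<in> ball_in V d c r"
      have "u \<notin> ball_in V d c' r" if c': "c' \<in> set (map fst (take p Hs))" for c'
      proof
        assume u2: "u \<in> ball_in V d c' r"
        from c' obtain j where j: "j < p" "c' = cH j"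
        proof -
          have "c' \<in> set (take p (map fst Hs))" using c' by (simp add: take_map)
          then obtain j where "j < length (take p (map fst Hs))" "take p (map fst Hs) ! j = c'"
            by (metis in_set_conv_nth)
          then have "j < p" "c' = cH j" unfolding cH_def by simp_all
          then show ?thesis using that by blast
        qed
        have jm: "j < m" using j p1(1) by simp
        have tri: "\<forall>x\<in>V. \<forall>y\<in>V. \<forall>z\<in>V. d x z \<le> d x y + d y z" and sym: "\<forall>x\<in>V. \<forall>y\<in>V. d x y = d y x"
          using assms(2) unfolding pseudo_metric_on_def by simp_all
        have uV: "u \<in> V" and du: "d c u \<le> r" using u unfolding ball_in_def by simp_all
        have du2: "d c' u \<le> r" using u2 unfolding ball_in_def by simp
        have cV: "c' \<in> V" using H1[OF jm] j(2) by simp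
        have "d c' c \<le> d c' u + d u c" using tri cV uV G1(1) by blast
        also have "d u c = d c u" using sym uV G1(1) by blast
        finally have "d c' c \<le> 2 * r" using du du2 by simp
        with far[OF jm p4[OF j(1)]] j(2) show False by simp
      qed
      then show "u \<in> uncovered V d (map fst (take p Hs)) r \<inter> ball_in V d c r"
        using u unfolding uncovered_def ball_in_def by blast
    qed
    have "\<not> real (card V) / real k2 \<le> real (card (uncovered V d (map fst (take p Hs)) r \<inter> ball_in V d c r))"
      using gcr_D2[OF assms(6) _ G1(2) _ _ G1(1)] p1 p3 unfolding m_def rH_def by blast
    moreover have "card (ball_in V d c r) \<le> card (uncovered V d (map fst (take p Hs)) r \<inter> ball_in V d c r)"
      using eq finB by (simp add: card_mono)
    ultimately show False using thr by simp
  qed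
qed

end
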